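(* For every $\widehat r\in\mathbb{N}$ and every $m\ge1$, \[\mathrm{Var}(\mu^{(b^m\widehat r+b^m-1)})=\frac1{b^m}\mathrm{Var}(\mu^{(\widehat r)})+\Big(1-\frac1{b^m}\Big)\mathrm{Var}(\mu^{(\widehat r+1)})+b-\frac1{b^{m-1}}.\]
   Context: Fix an integer $b\ge2$. For $n\in\mathbb{N}$ with base-$b$ digits $n_k$, $s(n):=\sum_kn_k$. For $r,n\in\mathbb{N}$, $\Delta^{(r)}(n):=s(n+r)-s(n)$, and $\mu^{(r)}(d):=\lim_{N\to\infty}\frac1N|\{n<N:\Delta^{(r)}(n)=d\}|$ for $d\in\mathbb{Z}$; these limits exist and $\mu^{(r)}$ is a probability measure on $\mathbb{Z}$ with finite moments. $\mathrm{Var}(\mu^{(r)})$ is its variance. *)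

theory Defs
  imports "HOL-Analysis.Analysis"
begin

function digsum :: "nat \<Rightarrow> nat \<Rightarrow> nat" where
  "digsum b n = (if b < 2 \<or> n = 0 then 0 else n mod b + digsum b (n div b))"
  by auto
termination by (relation "Wellfounded.measure snd") auto

declare digsum.simps [simp del]

definition Delta :: "nat \<Rightarrow> nat \<Rightarrow> nat \<Rightarrow> int" where
  "Delta b r n = int (digsum b (n + r)) - int (digsum b n)"

definition mu :: "nat \<Rightarrow> nat \<Rightarrow> int \<Rightarrow> real" where
  "mu b r d = lim (\<lambda>N. real (card {n. n < N \<and> Delta b r n = d}) / real N)"

definition Var_mu :: "nat \<Rightarrow> nat \<Rightarrow> real" where
  "Var_mu b r = (\<Sum>\<^sub>\<infinity> d\<in>(UNIV::int set). (real_of_int d)^2 * mu b r d)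
              - (\<Sum>\<^sub>\<infinity> d\<in>(UNIV::int set). real_of_int d * mu b r d)^2"

end

theory Submission
  imports Defs
begin


lemma digsum_0[simp]: "digsum b 0 = 0"
  by (simp add: digsum.simps)

lemma digsum_eq: "b \<ge> 2 \<Longrightarrow> digsum b n = (if n = 0 then 0 else n mod b + digsum b (n div b))"
  by (subst digsum.simps) auto

lemma digsum_digit: assumes "b \<ge> 2" "a < b" shows "digsum b (b*q + a) = digsum b q + a"
proof (cases "b*q + a = 0")
  case True then show ?thesis using assms by (auto simp: digsum_eq)
next
  case False
  have "(b*q+a) mod b = a" "(b*q+a) div b = q" using assms by auto
  then show ?thesis using False assms by (subst digsum_eq) auto
qed

lemma digsum_small: "b \<ge> 2 \<Longrightarrow> a < b \<Longrightarrow> digsum b a = a"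
  using digsum_digit[of b a 0] by (simp add: digsum_eq)

lemma digsum_pow: assumes "b \<ge> 2" "j < b^m" shows "digsum b (b^m*q + j) = digsum b q + digsum b j"
  using assms(2)
proof (induction m arbitrary: q j)
  case 0 then show ?case by (simp add: digsum_eq)
next
  case (Suc m)
  have jd: "j div b < b^m" using Suc.prems assms by (simp add: div_less_iff_less_mult mult.commute)
  have "b^Suc m * q + j = b*(b^m*q + j div b) + j mod b"
    by (simp add: algebra_simps)
  then have "digsum b (b^Suc m * q + j) = digsum b (b^m*q + j div b) + j mod b"
    using digsum_digit[OF assms(1)] assms by simp
  also have "\<dots> = digsum b q + (digsum b (j div b) + j mod b)" using Suc.IH[OF jd] by simp
  also have "digsum b (j div b) + j mod b = digsum b j"
    using digsum_digit[OF assms(1), of "j mod b" "j div b"] assms by simp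
  finally show ?case .
qed

lemma Delta_dec:
  assumes b: "b \<ge> 2" and a: "a < b^m" and j: "j < b^m"
  shows "Delta b (b^m*r0 + a) (b^m*q + j) =
    Delta b (if j + a < b^m then r0 else Suc r0) q + (int (digsum b ((j+a) mod b^m)) - int (digsum b j))"
proof (cases "j + a < b^m")
  case True
  have e: "b^m*q + j + (b^m*r0 + a) = b^m*(q+r0) + (j+a)" by (simp add: algebra_simps)
  have d1: "digsum b (b^m*q + j + (b^m*r0 + a)) = digsum b (q+r0) + digsum b (j+a)"
    unfolding e by (rule digsum_pow[OF b True])
  show ?thesis using True d1 digsum_pow[OF b j, of q]
    by (simp add: Delta_def)
next
  case False
  let ?B = "b^m"
  have lt: "j + a - ?B < ?B" using a j by linarith
  have e: "?B*q + j + (?B*r0 + a) = ?B*(q+Suc r0) + (j+a - ?B)" using False by (simp add: algebra_simps)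
  have d1: "digsum b (?B*q + j + (?B*r0 + a)) = digsum b (q+Suc r0) + digsum b (j+a - ?B)"
    unfolding e by (rule digsum_pow[OF b lt])
  moreover have "(j+a) mod ?B = j + a - ?B" using False a j
    by (simp add: le_mod_geq)
  ultimately show ?thesis using False digsum_pow[OF b j, of q]
    by (simp add: Delta_def)
qed

lemma lt_M_iff:
  fixes B :: nat assumes "B > 0" "j < B"
  shows "B*q + j < N \<longleftrightarrow> q < (N + B - 1 - j) div B"
proof -
  have "q < (N + B - 1 - j) div B \<longleftrightarrow> Suc q * B \<le> N + B - 1 - j"
    using assms(1) by (metis Suc_le_eq less_eq_div_iff_mult_less_eq)
  also have "\<dots> \<longleftrightarrow> B*q + j < N" using assms by (auto simp: algebra_simps)
  finally show ?thesis by simp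
qed

lemma count_split:
  fixes B :: nat and \<rho> :: "nat \<Rightarrow> nat" and \<kappa> :: "nat \<Rightarrow> int"
  assumes B: "B > 0" and dec: "\<And>q j. j < B \<Longrightarrow> Delta b r (B*q+j) = Delta b (\<rho> j) q + \<kappa> j"
  shows "card {n. n<N \<and> Delta b r n = d} =
     (\<Sum>j<B. card {q. q < (N + B - 1 - j) div B \<and> Delta b (\<rho> j) q = d - \<kappa> j})"
proof -
  let ?S = "{n. n<N \<and> Delta b r n = d}"
  have fS: "finite ?S" by simp
  have "card ?S = (\<Sum>j<B. card {n. n \<in> ?S \<and> n mod B = j})"
  proof -
    have "(\<lambda>n. n mod B) ` ?S \<subseteq> {..<B}" using B by auto
    from sum.group[OF fS finite_lessThan[of B] this, of "\<lambda>_. 1::nat"]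
    show ?thesis by simp
  qed
  also have "\<dots> = (\<Sum>j<B. card {q. q < (N + B - 1 - j) div B \<and> Delta b (\<rho> j) q = d - \<kappa> j})"
  proof (rule sum.cong[OF refl])
    fix j assume j: "j \<in> {..<B}"
    let ?Q = "{q. q < (N + B - 1 - j) div B \<and> Delta b (\<rho> j) q = d - \<kappa> j}"
    have "{n. n \<in> ?S \<and> n mod B = j} = (\<lambda>q. B*q+j) ` ?Q"
    proof (intro equalityI subsetI)
      fix n assume n: "n \<in> {n. n \<in> ?S \<and> n mod B = j}"
      then have nn: "n = B*(n div B) + j" using mult_div_mod_eq[of B n] by simp
      have "n div B \<in> ?Q" using n nn lt_M_iff[OF B, of j "n div B" N] dec[of j "n div B"] j
        by auto
      then show "n \<in> (\<lambda>q. B*q+j) ` ?Q" using nn by blast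
    next
      fix n assume "n \<in> (\<lambda>q. B*q+j) ` ?Q"
      then obtain q where q: "q \<in> ?Q" "n = B*q+j" by blast
      then show "n \<in> {n. n \<in> ?S \<and> n mod B = j}"
        using lt_M_iff[OF B, of j q N] dec[of j q] j by auto
    qed
    moreover have "inj_on (\<lambda>q. B*q+j) ?Q" using B by (auto simp: inj_on_def)
    ultimately show "card {n. n \<in> ?S \<and> n mod B = j} = card ?Q" by (simp add: card_image)
  qed
  finally show ?thesis .
qed



lemma ratio_lim:
  fixes B k :: nat assumes B: "B > 0"
  shows "(\<lambda>N. real ((N + k) div B) / real N) \<longlonglongrightarrow> 1 / real B"
proof (rule tendsto_sandwich)
  show "\<forall>\<^sub>F N in sequentially. (1/real B - 1 / real N) \<le> real ((N + k) div B) / real N"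
  proof (rule eventually_sequentiallyI[of 1])
    fix N :: nat assume N: "1 \<le> N"
    have "real (N + k) = real B * real ((N+k) div B) + real ((N+k) mod B)"
      by (metis of_nat_add of_nat_mult mult_div_mod_eq)
    moreover have "real ((N+k) mod B) < real B" using B by simp
    ultimately have "real N < real B * (real ((N + k) div B) + 1)" by (simp add: algebra_simps)
    then have "real N / real B - 1 \<le> real ((N + k) div B)" using B by (simp add: field_simps)
    then have "(real N / real B - 1)/real N \<le> real ((N + k) div B) / real N"
      by (rule divide_right_mono) simp
    moreover have "(real N / real B - 1)/real N = 1/real B - 1/real N" using N by (simp add: field_simps)
    ultimately show "(1/real B - 1 / real N) \<le> real ((N + k) div B) / real N" by simp
  qed
  show "\<forall>\<^sub>F N in sequentially. real ((N + k) div B) / real N \<le> 1/real B + (real k / real B) * (1 / real N)"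
  proof (rule eventually_sequentiallyI[of 1])
    fix N :: nat assume N: "1 \<le> N"
    have "real (N + k) = real B * real ((N+k) div B) + real ((N+k) mod B)"
      by (metis of_nat_add of_nat_mult mult_div_mod_eq)
    then have "real ((N + k) div B) \<le> real (N+k) / real B" using B by (simp add: field_simps)
    then show "real ((N + k) div B) / real N \<le> 1/real B + (real k / real B) * (1 / real N)"
      using N B by (simp add: field_simps)
  qed
  have "(\<lambda>N. 1 / real N) \<longlonglongrightarrow> 0" using lim_const_over_n[of 1] by simp
  then show "(\<lambda>N. 1/real B - 1 / real N) \<longlonglongrightarrow> 1 / real B"
    using tendsto_diff[OF tendsto_const] by fastforce
  show "(\<lambda>N. 1/real B + (real k / real B) * (1 / real N)) \<longlonglongrightarrow> 1 / real B"
    using tendsto_add[OF tendsto_const tendsto_mult[OF tendsto_const \<open>(\<lambda>N. 1 / real N) \<longlonglongrightarrow> 0\<close>], of "1/real B" "real k / real B"]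
    by simp
qed

lemma M_top:
  fixes B k :: nat assumes B: "B > 0"
  shows "filterlim (\<lambda>N. (N + k) div B) at_top sequentially"
  unfolding filterlim_at_top
proof
  fix Z :: nat
  show "\<forall>\<^sub>F N in sequentially. Z \<le> (N + k) div B"
  proof (rule eventually_sequentiallyI[of "Z*B"])
    fix N assume "Z*B \<le> N"
    then show "Z \<le> (N + k) div B" using B by (simp add: less_eq_div_iff_mult_less_eq)
  qed
qed

lemma comp_lim:
  fixes c :: "nat \<Rightarrow> nat" and B k :: nat
  assumes lim: "(\<lambda>N. real (c N) / real N) \<longlonglongrightarrow> L" and c0: "c 0 = 0" and B: "B > 0"
  shows "(\<lambda>N. real (c ((N+k) div B)) / real N) \<longlonglongrightarrow> L / real B"
proof -
  have "(\<lambda>N. real (c ((N+k) div B)) / real ((N+k) div B)) \<longlonglongrightarrow> L"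
    using filterlim_compose[OF lim M_top[OF B]] by simp
  from tendsto_mult[OF this ratio_lim[OF B, of k]]
  have "(\<lambda>N. real (c ((N+k) div B)) / real ((N+k) div B) * (real ((N + k) div B) / real N)) \<longlonglongrightarrow> L / real B"
    by simp
  moreover have "(\<lambda>N. real (c ((N+k) div B)) / real ((N+k) div B) * (real ((N + k) div B) / real N))
       = (\<lambda>N. real (c ((N+k) div B)) / real N)"
  proof
    fix N show "real (c ((N+k) div B)) / real ((N+k) div B) * (real ((N + k) div B) / real N)
       = real (c ((N+k) div B)) / real N"
      using c0 by (cases "(N+k) div B = 0") auto
  qed
  ultimately show ?thesis by metis
qed


lemma mix_lim:
  fixes B :: nat and \<rho> :: "nat \<Rightarrow> nat" and \<kappa> :: "nat \<Rightarrow> int"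
  assumes B: "B > 0" and dec: "\<And>q j. j < B \<Longrightarrow> Delta b r (B*q+j) = Delta b (\<rho> j) q + \<kappa> j"
    and lims: "\<And>j. j < B \<Longrightarrow>
      (\<lambda>N. real (card {q. q<N \<and> Delta b (\<rho> j) q = d - \<kappa> j}) / real N) \<longlonglongrightarrow> L j"
  shows "(\<lambda>N. real (card {n. n<N \<and> Delta b r n = d}) / real N) \<longlonglongrightarrow> (\<Sum>j<B. L j) / real B"
proof -
  have eq: "(\<lambda>N. real (card {n. n<N \<and> Delta b r n = d}) / real N) =
     (\<lambda>N. \<Sum>j<B. real (card {q. q < (N + (B - 1 - j)) div B \<and> Delta b (\<rho> j) q = d - \<kappa> j}) / real N)"
  proof
    fix N
    have aux: "\<And>j. j \<in> {..<B} \<Longrightarrow> N + B - 1 - j = N + (B - 1 - j)" using B by simp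
    have "card {n. n<N \<and> Delta b r n = d} =
     (\<Sum>j<B. card {q. q < (N + (B - 1 - j)) div B \<and> Delta b (\<rho> j) q = d - \<kappa> j})"
      using count_split[OF B dec, of N d] aux by simp
    then show "real (card {n. n<N \<and> Delta b r n = d}) / real N =
     (\<Sum>j<B. real (card {q. q < (N + (B - 1 - j)) div B \<and> Delta b (\<rho> j) q = d - \<kappa> j}) / real N)"
      by (simp add: sum_divide_distrib)
  qed
  have "(\<lambda>N. \<Sum>j<B. real (card {q. q < (N + (B - 1 - j)) div B \<and> Delta b (\<rho> j) q = d - \<kappa> j}) / real N)
     \<longlonglongrightarrow> (\<Sum>j<B. L j / real B)"
  proof (rule tendsto_sum)
    fix j assume j: "j \<in> {..<B}"
    show "(\<lambda>N. real (card {q. q < (N + (B - 1 - j)) div B \<and> Delta b (\<rho> j) q = d - \<kappa> j}) / real N)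
     \<longlonglongrightarrow> L j / real B"
      using j by (intro comp_lim[where c="\<lambda>M. card {q. q<M \<and> Delta b (\<rho> j) q = d - \<kappa> j}", OF lims _ B]) simp_all
  qed
  then show ?thesis unfolding eq by (simp add: sum_divide_distrib)
qed



definition dmom :: "(int \<Rightarrow> real) \<Rightarrow> real \<Rightarrow> real \<Rightarrow> real \<Rightarrow> bool" where
  "dmom p T M S \<longleftrightarrow> (p has_sum T) UNIV \<and> ((\<lambda>d. real_of_int d * p d) has_sum M) UNIV
      \<and> ((\<lambda>d. (real_of_int d)^2 * p d) has_sum S) UNIV"

lemma has_sum_sum_fin:
  fixes f :: "'i \<Rightarrow> 'a \<Rightarrow> real"
  assumes "finite I" "\<And>i. i \<in> I \<Longrightarrow> (f i has_sum a i) A"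
  shows "((\<lambda>x. \<Sum>i\<in>I. f i x) has_sum (\<Sum>i\<in>I. a i)) A"
  using assms
proof (induction I rule: finite_induct)
  case empty then show ?case by simp
next
  case (insert i I)
  then show ?case by (simp, intro has_sum_add) auto
qed

lemma has_sum_shift:
  fixes p :: "int \<Rightarrow> real"
  assumes "(p has_sum T) UNIV"
  shows "((\<lambda>d. p (d - c)) has_sum T) UNIV"
proof -
  have bij: "bij_betw (\<lambda>e. e + c) UNIV UNIV" by (rule bij_betwI[where g="\<lambda>e. e - c"]) auto
  show ?thesis using has_sum_reindex_bij_betw[OF bij, of "\<lambda>d. p (d - c)"] assms by simp
qed

lemma dmom_shift:
  fixes p :: "int \<Rightarrow> real" and c :: int and T M S :: real
  assumes "dmom p T M S"
  shows "dmom (\<lambda>d. p (d - c)) T (M + real_of_int c*T) (S + 2*real_of_int c*M + (real_of_int c)^2*T)"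
proof -
  have bij: "bij_betw (\<lambda>e. e + c) UNIV UNIV" by (rule bij_betwI[where g="\<lambda>e. e - c"]) auto
  note R = has_sum_reindex_bij_betw[OF bij]
  have h0: "(p has_sum T) UNIV" and h1: "((\<lambda>d. real_of_int d * p d) has_sum M) UNIV"
    and h2: "((\<lambda>d. (real_of_int d)^2 * p d) has_sum S) UNIV" using assms by (auto simp: dmom_def)
  have a: "((\<lambda>d. p (d - c)) has_sum T) UNIV" using R[of "\<lambda>d. p (d - c)"] h0 by simp
  have "((\<lambda>e. real_of_int e * p e + real_of_int c * p e) has_sum (M + real_of_int c*T)) UNIV"
    by (intro has_sum_add h1 has_sum_cmult_right h0)
  then have b: "((\<lambda>d. real_of_int d * p (d - c)) has_sum (M + real_of_int c*T)) UNIV"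
    using R[of "\<lambda>d. real_of_int d * p (d - c)"] by (simp add: algebra_simps)
  have "((\<lambda>e. (real_of_int e)^2 * p e + (2*real_of_int c * (real_of_int e * p e)) + (real_of_int c)^2 * p e)
      has_sum (S + 2*real_of_int c*M + (real_of_int c)^2*T)) UNIV"
    by (intro has_sum_add h1 h2 has_sum_cmult_right h0)
  then have c: "((\<lambda>d. (real_of_int d)^2 * p (d - c)) has_sum (S + 2*real_of_int c*M + (real_of_int c)^2*T)) UNIV"
    using R[of "\<lambda>d. (real_of_int d)^2 * p (d - c)"] by (simp add: algebra_simps power2_eq_square)
  show ?thesis using a b c by (simp add: dmom_def)
qed

lemma dmom_mix:
  fixes q :: "nat \<Rightarrow> int \<Rightarrow> real" and \<kappa> :: "nat \<Rightarrow> int" and B :: nat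
    and T M S :: "nat \<Rightarrow> real"
  assumes p: "\<And>d. p d = (\<Sum>j<B. q j (d - \<kappa> j)) / real B"
    and qs: "\<And>j. j < B \<Longrightarrow> dmom (q j) (T j) (M j) (S j)"
  shows "dmom p ((\<Sum>j<B. T j) / real B) ((\<Sum>j<B. M j + real_of_int (\<kappa> j) * T j) / real B)
     ((\<Sum>j<B. S j + 2 * real_of_int (\<kappa> j) * M j + (real_of_int (\<kappa> j))^2 * T j) / real B)"
proof -
  have sh: "dmom (\<lambda>d. q j (d - \<kappa> j)) (T j) (M j + real_of_int (\<kappa> j) * T j) (S j + 2 * real_of_int (\<kappa> j) * M j + (real_of_int (\<kappa> j))^2 * T j)"
    if "j \<in> {..<B}" for j using dmom_shift[OF qs] that by simp
  have s0: "((\<lambda>d. \<Sum>j<B. q j (d - \<kappa> j)) has_sum (\<Sum>j<B. T j)) UNIV"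
    by (rule has_sum_sum_fin) (use sh in \<open>auto simp: dmom_def\<close>)
  have s1: "((\<lambda>d. \<Sum>j<B. real_of_int d * q j (d - \<kappa> j)) has_sum (\<Sum>j<B. M j + real_of_int (\<kappa> j) * T j)) UNIV"
    by (rule has_sum_sum_fin) (use sh in \<open>auto simp: dmom_def\<close>)
  have s2: "((\<lambda>d. \<Sum>j<B. (real_of_int d)^2 * q j (d - \<kappa> j)) has_sum (\<Sum>j<B. S j + 2 * real_of_int (\<kappa> j) * M j + (real_of_int (\<kappa> j))^2 * T j)) UNIV"
    by (rule has_sum_sum_fin) (use sh in \<open>auto simp: dmom_def\<close>)
  have pf: "p = (\<lambda>d. (\<Sum>j<B. q j (d - \<kappa> j)) / real B)" by (rule ext) (rule p)
  have t0: "(p has_sum ((\<Sum>j<B. T j) / real B)) UNIV"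
    using has_sum_cmult_right[OF s0, of "1 / real B"] by (simp add: pf)
  have t1: "((\<lambda>d. real_of_int d * p d) has_sum ((\<Sum>j<B. M j + real_of_int (\<kappa> j) * T j) / real B)) UNIV"
  proof -
    have e: "(\<lambda>d. real_of_int d * p d) = (\<lambda>d. 1/real B * (\<Sum>j<B. real_of_int d * q j (d - \<kappa> j)))"
      by (auto simp: pf sum_distrib_left sum_divide_distrib)
    show ?thesis unfolding e using has_sum_cmult_right[OF s1, of "1 / real B"] by simp
  qed
  have t2: "((\<lambda>d. (real_of_int d)^2 * p d) has_sum ((\<Sum>j<B. S j + 2 * real_of_int (\<kappa> j) * M j + (real_of_int (\<kappa> j))^2 * T j) / real B)) UNIV"
  proof -
    have e: "(\<lambda>d. (real_of_int d)^2 * p d) = (\<lambda>d. 1/real B * (\<Sum>j<B. (real_of_int d)^2 * q j (d - \<kappa> j)))"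
      by (auto simp: pf sum_distrib_left sum_divide_distrib)
    show ?thesis unfolding e using has_sum_cmult_right[OF s2, of "1 / real B"] by simp
  qed
  show ?thesis using t0 t1 t2 by (simp add: dmom_def)
qed

lemma rot_mod:
  fixes B j :: nat assumes "B > 0" "j < B"
  shows "(j + (B - 1)) mod B = (if j = 0 then B - 1 else j - 1)"
proof (cases "j = 0")
  case True then show ?thesis using assms by simp
next
  case False
  have eq: "j + (B - 1) = (j - 1) + B" using assms False by simp
  show ?thesis unfolding eq mod_add_self2 using False assms by simp
qed

definition Dk :: "nat \<Rightarrow> nat \<Rightarrow> nat \<Rightarrow> int" where
  "Dk b m j = int (digsum b ((j + (b^m - 1)) mod b^m)) - int (digsum b j)"

lemma Dk_rec:
  assumes b: "b \<ge> 2" and a: "a < b" and q: "q < b^m"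
  shows "Dk b (Suc m) (b*q + a) = (if a = 0 then Dk b m q + (int b - 1) else -1)"
proof -
  have B: "b^m > 0" using b by simp
  have B': "b^Suc m > 0" using b by simp
  have jl: "b*q + a < b^Suc m"
  proof -
    have "b*q + a < b*q + b" using a by simp
    also have "\<dots> = b*(q+1)" by simp
    also have "\<dots> \<le> b * b^m" using q b by (intro mult_left_mono) auto
    finally show ?thesis by simp
  qed
  show ?thesis
  proof (cases "a = 0")
    case False
    then have "(b*q + a + (b^Suc m - 1)) mod b^Suc m = b*q + (a - 1)"
      using rot_mod[OF B' jl] by simp
    then show ?thesis using False digsum_digit[OF b a, of q] digsum_digit[OF b, of "a-1" q] a
      by (simp add: Dk_def)
  next
    case True
    show ?thesis
    proof (cases "q = 0")
      case True
      have e: "b^Suc m - 1 = b*(b^m - 1) + (b - 1)"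
        using B b by (simp add: algebra_simps diff_mult_distrib2)
      have d: "digsum b (b^Suc m - 1) = digsum b (b^m - 1) + (b - 1)"
        unfolding e by (rule digsum_digit) (use b in auto)
      have "(b^m - 1) mod b^m = b^m - 1" "(b^Suc m - 1) mod b^Suc m = b^Suc m - 1" using B B' by auto
      then show ?thesis using True \<open>a = 0\<close> d b
        unfolding Dk_def by simp
    next
      case False
      have "(b*q + (b^Suc m - 1)) mod b^Suc m = b*q - 1"
        using rot_mod[OF B' jl] \<open>a = 0\<close> False b by simp
      also have "b*q - 1 = b*(q - 1) + (b - 1)" using False b by (cases q) (auto simp: algebra_simps)
      finally have e1: "(b*q + (b^Suc m - 1)) mod b^Suc m = b*(q - 1) + (b - 1)" .
      have e2: "(q + (b^m - 1)) mod b^m = q - 1" using rot_mod[OF B q] False by simp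
      have "digsum b (b*q + 0) = digsum b q + 0" by (rule digsum_digit[OF b]) (use b in simp)
      then show ?thesis using \<open>a = 0\<close> False e1 e2 digsum_digit[OF b, of "b-1" "q - 1"] b
        by (simp add: Dk_def)
    qed
  qed
qed

lemma sum_split_mult:
  fixes f :: "nat \<Rightarrow> 'a::comm_monoid_add"
  shows "(\<Sum>j<b*Q. f j) = (\<Sum>q<Q. \<Sum>a<b. f (b*q + a))"
proof (induction Q)
  case 0 then show ?case by simp
next
  case (Suc Q)
  have "{..<b*Suc Q} = {..<b*Q} \<union> {b*Q..<b*Q + b}" by auto
  then have "(\<Sum>j<b*Suc Q. f j) = (\<Sum>j<b*Q. f j) + (\<Sum>j\<in>{b*Q..<b*Q + b}. f j)"
    by (simp add: sum.union_disjoint ivl_disj_int)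
  also have "(\<Sum>j\<in>{b*Q..<b*Q + b}. f j) = (\<Sum>a<b. f (b*Q + a))"
    using sum.shift_bounds_nat_ivl[of f 0 "b*Q" b] by (simp add: atLeast0LessThan add.commute)
  finally show ?case using Suc by simp
qed

lemma Dk_sums:
  assumes b: "b \<ge> 2"
  shows "(\<Sum>j<b^m. Dk b m j) = 0 \<and> (\<Sum>j<b^m. (Dk b m j)^2) = int b ^ (m+1) - int b"
proof (induction m)
  case 0
  then show ?case by (simp add: Dk_def)
next
  case (Suc m)
  obtain c where c: "b = Suc c" using b by (cases b) auto
  have inner: "(\<Sum>a<b. f (if a = 0 then X else Y)) = f X + of_nat c * f Y"
    for f :: "int \<Rightarrow> int" and X Y
    unfolding c by (simp add: sum.lessThan_Suc_shift del: sum.lessThan_Suc)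
  have row: "(\<Sum>a<b. g (Dk b (Suc m) (b*q + a))) =
      g (Dk b m q + (int b - 1)) + of_nat c * g (-1)" if "q \<in> {..<b^m}" for g :: "int \<Rightarrow> int" and q
  proof -
    have "(\<Sum>a<b. g (Dk b (Suc m) (b*q + a))) = (\<Sum>a<b. g (if a = 0 then Dk b m q + (int b - 1) else -1))"
      by (rule sum.cong[OF refl]) (use Dk_rec[OF b] that in auto)
    then show ?thesis by (simp only: inner)
  qed
  have s1: "(\<Sum>j<b^Suc m. Dk b (Suc m) j) = (\<Sum>q<b^m. Dk b m q + (int b - 1) - int c)"
  proof -
    have "(\<Sum>j<b^Suc m. Dk b (Suc m) j) = (\<Sum>q<b^m. \<Sum>a<b. Dk b (Suc m) (b*q + a))"
      by (simp only: power_Suc sum_split_mult)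
    also have "\<dots> = (\<Sum>q<b^m. Dk b m q + (int b - 1) + of_nat c * (-1))"
      by (rule sum.cong[OF refl]) (rule row[of _ "\<lambda>x. x"])
    finally show ?thesis by simp
  qed
  have s2: "(\<Sum>j<b^Suc m. (Dk b (Suc m) j)^2) = (\<Sum>q<b^m. (Dk b m q + (int b - 1))^2 + int c)"
  proof -
    have "(\<Sum>j<b^Suc m. (Dk b (Suc m) j)^2) = (\<Sum>q<b^m. \<Sum>a<b. (Dk b (Suc m) (b*q + a))^2)"
      by (simp only: power_Suc sum_split_mult)
    also have "\<dots> = (\<Sum>q<b^m. (Dk b m q + (int b - 1))^2 + of_nat c * (-1)^2)"
      by (rule sum.cong[OF refl]) (rule row[of _ "\<lambda>x. x^2"])
    finally show ?thesis by simp
  qed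
  have cb: "int c = int b - 1" using c by simp
  have e1: "(\<Sum>q<b^m. Dk b m q + (int b - 1) - int c) = (\<Sum>q<b^m. Dk b m q)"
    by (simp add: cb)
  have e2: "(\<Sum>q<b^m. (Dk b m q + (int b - 1))^2 + int c) =
      (\<Sum>q<b^m. (Dk b m q)^2) + 2*(int b - 1) * (\<Sum>q<b^m. Dk b m q) + int (b^m) * ((int b - 1)^2 + (int b - 1))"
  proof -
    have "(\<Sum>q<b^m. (Dk b m q + (int b - 1))^2 + int c) =
       (\<Sum>q<b^m. (Dk b m q)^2 + 2*(int b - 1) * Dk b m q + ((int b - 1)^2 + (int b - 1)))"
      by (rule sum.cong[OF refl]) (simp add: cb power2_eq_square algebra_simps)
    also have "\<dots> = (\<Sum>q<b^m. (Dk b m q)^2) + 2*(int b - 1) * (\<Sum>q<b^m. Dk b m q) + int (b^m) * ((int b - 1)^2 + (int b - 1))"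
      by (simp add: sum.distrib sum_distrib_left)
    finally show ?thesis .
  qed
  have fin: "int b ^ (m+1) - int b + int (b^m) * ((int b - 1)^2 + (int b - 1)) = int b ^ (Suc m + 1) - int b"
    by (simp add: power2_eq_square algebra_simps)
  show ?case using Suc s1 s2 e1 e2 fin by simp
qed

lemma mod_inj_aux: assumes "(j + a) mod (B::nat) = (k + a) mod B" "j < B" "k < B" shows "j = k"
proof -
  have "B dvd nat \<bar>int (j+a) - int (k+a)\<bar>" using assms(1) mod_eq_iff_dvd_symdiff_nat by blast
  then have d: "B dvd nat \<bar>int j - int k\<bar>" by simp
  have "nat \<bar>int j - int k\<bar> < B" using assms(2,3) by linarith
  then have "nat \<bar>int j - int k\<bar> = 0" using d by (metis dvd_imp_le not_le neq0_conv)
  then show ?thesis by simp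
qed

lemma sum_rotate:
  fixes B :: nat assumes B: "B > 0"
  shows "(\<Sum>j<B. f ((j + a) mod B)) = (\<Sum>j<B. f j)"
proof -
  have inj: "inj_on (\<lambda>j. (j + a) mod B) {..<B}" by (auto simp: inj_on_def intro: mod_inj_aux)
  have sub: "(\<lambda>j. (j + a) mod B) ` {..<B} \<subseteq> {..<B}" using B by auto
  have "(\<lambda>j. (j + a) mod B) ` {..<B} = {..<B}"
    by (rule endo_inj_surj[OF finite_lessThan sub inj])
  then have "bij_betw (\<lambda>j. (j + a) mod B) {..<B} {..<B}" using inj by (simp add: bij_betw_def)
  then show ?thesis by (rule sum.reindex_bij_betw)
qed


lemma summable_sq_geom: "summable (\<lambda>k::nat. (real k + 1)^2 * (1/2)^k)"
proof (rule summable_ratio_test[where c="25/32" and N=3])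
  fix n :: nat assume n: "3 \<le> n"
  have "16 * (real n + 2)^2 \<le> 25 * (real n + 1)^2"
  proof -
    have "4 * (real n + 2) \<le> 5 * (real n + 1)" using n by simp
    then have "(4 * (real n + 2))^2 \<le> (5 * (real n + 1))^2" by (rule power_mono) simp
    then show ?thesis by (simp add: power2_eq_square algebra_simps)
  qed
  then have "(real n + 2)^2 * (1/2) \<le> 25/32 * (real n + 1)^2" by simp
  then have "(real n + 2)^2 * (1/2) * (1/2)^n \<le> 25/32 * (real n + 1)^2 * (1/2)^n"
    by (rule mult_right_mono) simp
  then show "norm ((real (Suc n) + 1)^2 * (1/2)^Suc n) \<le> 25/32 * norm ((real n + 1)^2 * (1/2)^n)"
    by (simp add: algebra_simps)
qed simp

lemma sqa: "\<bar>real_of_int d\<bar> \<le> (real_of_int d)^2"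
proof (cases "d = 0")
  case False
  then have "1 \<le> \<bar>d\<bar>" by linarith
  then have "\<bar>d\<bar> * 1 \<le> \<bar>d\<bar> * \<bar>d\<bar>" by (intro mult_left_mono) auto
  also have "\<bar>d\<bar> * \<bar>d\<bar> = d^2" by (simp add: power2_eq_square)
  finally have "\<bar>d\<bar> \<le> d^2" by simp
  then have "real_of_int \<bar>d\<bar> \<le> real_of_int (d^2)" by linarith
  then show ?thesis by simp
qed simp
lemma sq1: "d \<noteq> 0 \<Longrightarrow> 1 \<le> (real_of_int d)^2"
proof -
  assume "d \<noteq> 0"
  then have "1 \<le> \<bar>d\<bar>" by linarith
  then have "1 \<le> real_of_int \<bar>d\<bar>" by linarith
  then show ?thesis using sqa[of d] by simp
qed

lemma mom_from_sq:
  fixes p :: "int \<Rightarrow> real"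
  assumes nn: "\<And>d. p d \<ge> 0" and sq: "(\<lambda>d. (real_of_int d)^2 * p d) summable_on UNIV"
  shows "p summable_on UNIV" "(\<lambda>d. real_of_int d * p d) summable_on UNIV"
proof -
  have "(\<lambda>d. norm (real_of_int d * p d)) summable_on UNIV"
  proof (rule summable_on_comparison_test[OF sq])
    fix d :: int
    show "0 \<le> norm (real_of_int d * p d)" by simp
    have "\<bar>real_of_int d\<bar> * p d \<le> (real_of_int d)^2 * p d" by (rule mult_right_mono[OF sqa nn])
    then show "norm (real_of_int d * p d) \<le> (real_of_int d)^2 * p d"
      using nn[of d] by (simp add: abs_mult)
  qed
  then show "(\<lambda>d. real_of_int d * p d) summable_on UNIV"
    by (rule summable_on_iff_abs_summable_on_real[THEN iffD2])
  have z: "(\<lambda>d::int. if d = 0 then p 0 else 0) summable_on UNIV"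
  proof -
    have "(\<lambda>d::int. if d = 0 then p 0 else 0) summable_on UNIV \<longleftrightarrow> (\<lambda>d::int. if d = 0 then p 0 else 0) summable_on {0}"
      by (rule summable_on_cong_neutral) auto
    then show ?thesis by simp
  qed
  have "(\<lambda>d. (real_of_int d)^2 * p d + (if d = 0 then p 0 else 0)) summable_on UNIV"
    by (rule summable_on_add[OF sq z])
  then show "p summable_on UNIV"
  proof (rule summable_on_comparison_test)
    fix d :: int
    show "0 \<le> p d" by (rule nn)
    show "p d \<le> (real_of_int d)^2 * p d + (if d = 0 then p 0 else 0)"
    proof (cases "d = 0")
      case False
      then have "1 \<le> (real_of_int d)^2" by (rule sq1)
      have "1 * p d \<le> (real_of_int d)^2 * p d" by (rule mult_right_mono[OF \<open>1 \<le> (real_of_int d)^2\<close> nn])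
      then show ?thesis using False by simp
    qed simp
  qed
qed



definition conv :: "nat \<Rightarrow> nat \<Rightarrow> bool" where
  "conv b r \<longleftrightarrow> (\<forall>d. convergent (\<lambda>N. real (card {n. n<N \<and> Delta b r n = d}) / real N))"

lemma conv_lim: "conv b r \<Longrightarrow> (\<lambda>N. real (card {n. n<N \<and> Delta b r n = d}) / real N) \<longlonglongrightarrow> mu b r d"
  unfolding conv_def mu_def by (simp add: convergent_LIMSEQ_iff)

lemma mu_eq: "(\<lambda>N. real (card {n. n<N \<and> Delta b r n = d}) / real N) \<longlonglongrightarrow> L \<Longrightarrow> mu b r d = L"
  unfolding mu_def by (rule limI)

lemma mix_all:
  fixes B :: nat and \<rho> :: "nat \<Rightarrow> nat" and \<kappa> :: "nat \<Rightarrow> int"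
  assumes B: "B > 0" and dec: "\<And>q j. j < B \<Longrightarrow> Delta b r (B*q+j) = Delta b (\<rho> j) q + \<kappa> j"
    and cs: "\<And>j. j < B \<Longrightarrow> conv b (\<rho> j)"
  shows "conv b r \<and> (\<forall>d. mu b r d = (\<Sum>j<B. mu b (\<rho> j) (d - \<kappa> j)) / real B)"
proof -
  have L: "(\<lambda>N. real (card {n. n<N \<and> Delta b r n = d}) / real N) \<longlonglongrightarrow> (\<Sum>j<B. mu b (\<rho> j) (d - \<kappa> j)) / real B" for d
    by (rule mix_lim[OF B dec]) (use cs conv_lim in auto)
  show ?thesis using L mu_eq unfolding conv_def convergent_def by blast
qed

lemma dmom_infsum:
  assumes "dmom (mu b r) T M S" shows "Var_mu b r = S - M^2"
proof -
  have h1: "((\<lambda>d. real_of_int d * mu b r d) has_sum M) UNIV"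
    and h2: "((\<lambda>d. (real_of_int d)^2 * mu b r d) has_sum S) UNIV" using assms by (auto simp: dmom_def)
  show ?thesis unfolding Var_mu_def using infsumI[OF h1] infsumI[OF h2] by simp
qed

lemma step:
  fixes B a :: nat and \<rho> :: "nat \<Rightarrow> nat" and Sf :: "nat \<Rightarrow> real"
  assumes B: "B > 0"
    and dec: "\<And>q j. j < B \<Longrightarrow> Delta b r (B*q+j) = Delta b (\<rho> j) q +
         (int (digsum b ((j + a) mod B)) - int (digsum b j))"
    and cs: "\<And>j. j < B \<Longrightarrow> conv b (\<rho> j)"
    and ds: "\<And>j. j < B \<Longrightarrow> dmom (mu b (\<rho> j)) 1 0 (Sf j)"
  shows "conv b r \<and> dmom (mu b r) 1 0
     ((\<Sum>j<B. Sf j + (real_of_int (int (digsum b ((j + a) mod B)) - int (digsum b j)))^2) / real B)"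
proof -
  define \<kappa> where "\<kappa> j = int (digsum b ((j + a) mod B)) - int (digsum b j)" for j
  have dec': "\<And>q j. j < B \<Longrightarrow> Delta b r (B*q+j) = Delta b (\<rho> j) q + \<kappa> j"
    using dec unfolding \<kappa>_def by blast
  from mix_all[OF B dec' cs] have c: "conv b r" and p: "\<And>d. mu b r d = (\<Sum>j<B. mu b (\<rho> j) (d - \<kappa> j)) / real B"
    by auto
  have "dmom (mu b r) ((\<Sum>j<B. 1) / real B) ((\<Sum>j<B. 0 + real_of_int (\<kappa> j) * 1) / real B)
     ((\<Sum>j<B. Sf j + 2 * real_of_int (\<kappa> j) * 0 + (real_of_int (\<kappa> j))^2 * 1) / real B)"
    by (rule dmom_mix[OF p ds])
  moreover have "(\<Sum>j<B. real_of_int (\<kappa> j)) = 0"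
  proof -
    have "(\<Sum>j<B. \<kappa> j) = (\<Sum>j<B. int (digsum b ((j + a) mod B))) - (\<Sum>j<B. int (digsum b j))"
      unfolding \<kappa>_def by (simp add: sum_subtractf)
    also have "\<dots> = 0" using sum_rotate[OF B, of "\<lambda>j. int (digsum b j)" a] by simp
    finally show ?thesis by (metis of_int_0 of_int_sum)
  qed
  ultimately show ?thesis using c B unfolding \<kappa>_def by simp
qed




lemma Delta0[simp]: "Delta b 0 n = 0" by (simp add: Delta_def)

lemma base0: "conv b 0 \<and> (\<forall>d. mu b 0 d = (if d = 0 then 1 else 0)) \<and> dmom (mu b 0) 1 0 0"
proof -
  have one: "(\<lambda>N. real N / real N) \<longlonglongrightarrow> 1"
  proof (rule Lim_transform_eventually[OF tendsto_const])
    show "\<forall>\<^sub>F N in sequentially. 1 = real N / real N"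
      by (rule eventually_sequentiallyI[of 1]) simp
  qed
  have L: "(\<lambda>N. real (card {n. n<N \<and> Delta b 0 n = d}) / real N) \<longlonglongrightarrow> (if d = 0 then 1 else 0)" for d
    using one by (cases "d = 0") simp_all
  then have c: "conv b 0" unfolding conv_def convergent_def by blast
  have m: "\<And>d. mu b 0 d = (if d = 0 then 1 else 0)" using L mu_eq by blast
  have "((\<lambda>d::int. if d = 0 then 1 else 0 :: real) has_sum 1) UNIV \<longleftrightarrow> ((\<lambda>d::int. if d = 0 then 1 else 0 :: real) has_sum 1) {0}"
    by (rule has_sum_cong_neutral) auto
  moreover have "((\<lambda>d::int. if d = 0 then 1 else 0 :: real) has_sum 1) {0}"
    by (rule has_sum_finiteI) auto
  ultimately have "((\<lambda>d::int. if d = 0 then 1 else 0 :: real) has_sum 1) UNIV" by simp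
  moreover have "(\<lambda>d::int. real_of_int d * (if d = 0 then 1 else 0)) = (\<lambda>_. 0)" by auto
  moreover have "(\<lambda>d::int. (real_of_int d)^2 * (if d = 0 then 1 else 0)) = (\<lambda>_. 0)" by auto
  ultimately have "dmom (mu b 0) 1 0 0" unfolding dmom_def m[abs_def] by simp
  then show ?thesis using c m by blast
qed




lemma dec1:
  assumes b: "b \<ge> 2" and j: "j < b"
  shows "Delta b 1 (b*q+j) = Delta b (if j + 1 < b then 0 else 1) q + (if j + 1 < b then 1 else 1 - int b)"
proof -
  have a: "1 < b^1" using b by simp
  have "Delta b (b^1*0 + 1) (b^1*q + j) = Delta b (if j + 1 < b^1 then 0 else Suc 0) q +
     (int (digsum b ((j+1) mod b^1)) - int (digsum b j))"
    by (rule Delta_dec[OF b a]) (use j in simp)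
  moreover have "int (digsum b ((j+1) mod b)) - int (digsum b j) = (if j + 1 < b then 1 else 1 - int b)"
  proof (cases "j + 1 < b")
    case True then show ?thesis using digsum_small[OF b True] digsum_small[OF b j] by simp
  next
    case False
    then have "j + 1 = b" using j by simp
    then show ?thesis using digsum_small[OF b j] by simp
  qed
  ultimately show ?thesis by simp
qed

lemma Delta1_le:
  assumes b: "b \<ge> 2" shows "Delta b 1 n \<le> 1"
proof (induction n rule: less_induct)
  case (less n)
  have j: "n mod b < b" using b by simp
  have n: "n = b*(n div b) + n mod b" by simp
  show ?case
  proof (cases "n mod b + 1 < b")
    case True
    then show ?thesis using dec1[OF b j, of "n div b"] n by simp
  next
    case False
    then have "n mod b \<ge> 1" using b by linarith
    then have "n \<ge> 1" using mod_less_eq_dividend[of n b] by linarith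
    then have "n div b < n" using b by simp
    then have "Delta b 1 (n div b) \<le> 1" by (rule less.IH)
    then show ?thesis using dec1[OF b j, of "n div b"] n False b by simp
  qed
qed


definition rho1 :: "nat \<Rightarrow> nat \<Rightarrow> nat" where "rho1 b j = (if j + 1 < b then 0 else 1)"
definition kap1 :: "nat \<Rightarrow> nat \<Rightarrow> int" where "kap1 b j = (if j + 1 < b then 1 else 1 - int b)"

lemma dec1': "b \<ge> 2 \<Longrightarrow> j < b \<Longrightarrow> Delta b 1 (b*q+j) = Delta b (rho1 b j) q + kap1 b j"
  using dec1 unfolding rho1_def kap1_def by simp

lemma conv1: assumes b: "b \<ge> 2" shows "conv b 1"
proof -
  have dec: "\<And>q j. j < b \<Longrightarrow> Delta b 1 (b*q+j) = Delta b (rho1 b j) q + kap1 b j"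
    using dec1'[OF b] by simp
  have B: "b > 0" using b by simp
  have c0: "conv b 0" using base0 by blast
  have main: "convergent (\<lambda>N. real (card {n. n<N \<and> Delta b 1 n = d}) / real N)" for d
  proof (induction "nat (2 - d)" arbitrary: d rule: less_induct)
    case less
    show ?case
    proof (cases "d \<ge> 2")
      case True
      have "Delta b 1 n \<noteq> d" for n using Delta1_le[OF b, of n] True by linarith
      then have "{n. n<N \<and> Delta b 1 n = d} = {}" for N by blast
      then have e: "(\<lambda>N. real (card {n. n<N \<and> Delta b 1 n = d}) / real N) = (\<lambda>N. 0)"
        by (simp only: card.empty) simp
      show ?thesis unfolding e by (rule convergent_const)
    next
      case False
      have cj: "convergent (\<lambda>N. real (card {q. q<N \<and> Delta b (rho1 b j) q = d - kap1 b j}) / real N)" if "j < b" for j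
      proof (cases "j + 1 < b")
        case True
        then have "rho1 b j = 0" by (simp add: rho1_def)
        then show ?thesis using c0[unfolded conv_def, rule_format, of "d - kap1 b j"] by simp
      next
        case False2: False
        then have "rho1 b j = 1" "d - kap1 b j = d + int b - 1" unfolding rho1_def kap1_def by auto
        moreover have "nat (2 - (d + int b - 1)) < nat (2 - d)" using False b by simp
        ultimately show ?thesis using less by simp
      qed
      have "(\<lambda>N. real (card {n. n<N \<and> Delta b 1 n = d}) / real N) \<longlonglongrightarrow>
          (\<Sum>j<b. lim (\<lambda>N. real (card {q. q<N \<and> Delta b (rho1 b j) q = d - kap1 b j}) / real N)) / real b"
      proof (rule mix_lim[OF B dec])
        fix j assume "j < b"
        from cj[OF this] show "(\<lambda>N. real (card {q. q<N \<and> Delta b (rho1 b j) q = d - kap1 b j}) / real N)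
          \<longlonglongrightarrow> lim (\<lambda>N. real (card {q. q<N \<and> Delta b (rho1 b j) q = d - kap1 b j}) / real N)"
          by (simp add: convergent_LIMSEQ_iff)
      qed
      then show ?thesis unfolding convergent_def by blast
    qed
  qed
  then show ?thesis unfolding conv_def by blast
qed

lemma rel1:
  assumes b: "b \<ge> 2"
  shows "mu b 1 d = ((if d = 1 then real b - 1 else 0) + mu b 1 (d + int b - 1)) / real b"
proof -
  have dec: "\<And>q j. j < b \<Longrightarrow> Delta b 1 (b*q+j) = Delta b (rho1 b j) q + kap1 b j"
    using dec1'[OF b] by simp
  have B: "b > 0" using b by simp
  have cs: "conv b (rho1 b j)" for j using base0 conv1[OF b] unfolding rho1_def by auto
  from mix_all[OF B dec cs] have m: "mu b 1 d = (\<Sum>j<b. mu b (rho1 b j) (d - kap1 b j)) / real b" by blast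
  obtain c where c: "b = Suc c" using b by (cases b) auto
  have "(\<Sum>j<b. mu b (rho1 b j) (d - kap1 b j)) = (\<Sum>j<c. mu b (rho1 b j) (d - kap1 b j)) + mu b 1 (d + int b - 1)"
    unfolding c by (simp add: rho1_def kap1_def)
  also have "(\<Sum>j<c. mu b (rho1 b j) (d - kap1 b j)) = (\<Sum>j<c. (if d = 1 then 1 else 0))"
    by (rule sum.cong[OF refl]) (use base0 c in \<open>auto simp: rho1_def kap1_def\<close>)
  also have "\<dots> = (if d = 1 then real b - 1 else 0)" using c by simp
  finally show ?thesis using m by simp
qed


lemma mu1_ge2:
  assumes b: "b \<ge> 2" and d: "d \<ge> 2" shows "mu b 1 d = 0"
proof -
  have "Delta b 1 n \<noteq> d" for n using Delta1_le[OF b, of n] d by linarith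
  then have "{n. n<N \<and> Delta b 1 n = d} = {}" for N by blast
  then have e: "(\<lambda>N. real (card {n. n<N \<and> Delta b 1 n = d}) / real N) = (\<lambda>N. 0)"
    by (simp only: card.empty) simp
  show ?thesis by (rule mu_eq) (simp only: e tendsto_const)
qed

lemma mu1_zero:
  assumes b: "b \<ge> 2" and nd: "\<forall>k::nat. d \<noteq> 1 - (int b - 1) * int k"
  shows "mu b 1 d = 0"
  using nd
proof (induction "nat (2 - d)" arbitrary: d rule: less_induct)
  case less
  show ?case
  proof (cases "d \<ge> 2")
    case True then show ?thesis by (rule mu1_ge2[OF b])
  next
    case False
    have d1: "d \<noteq> 1" using less.prems[rule_format, of 0] by simp
    have nd': "\<forall>k::nat. d + int b - 1 \<noteq> 1 - (int b - 1) * int k"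
    proof
      fix k :: nat
      show "d + int b - 1 \<noteq> 1 - (int b - 1) * int k"
      proof
        assume "d + int b - 1 = 1 - (int b - 1) * int k"
        then have "d = 1 - (int b - 1) * int (Suc k)" by (simp add: algebra_simps)
        then show False using less.prems by blast
      qed
    qed
    have "nat (2 - (d + int b - 1)) < nat (2 - d)" using False b by simp
    then have "mu b 1 (d + int b - 1) = 0" using less.hyps nd' by blast
    then show ?thesis using rel1[OF b, of d] d1 by simp
  qed
qed

lemma mu1_val:
  assumes b: "b \<ge> 2"
  shows "mu b 1 (1 - (int b - 1) * int k) = (real b - 1) / real b ^ (k+1)"
proof (induction k)
  case 0
  have "mu b 1 (int b) = 0" by (rule mu1_ge2[OF b]) (use b in simp)
  then show ?case using rel1[OF b, of 1] by simp
next
  case (Suc k)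
  let ?d = "1 - (int b - 1) * int (Suc k)"
  have "(int b - 1) * int (Suc k) \<ge> 1 * 1" using b by (intro mult_mono) auto
  then have d1: "?d \<noteq> 1" by linarith
  have e: "?d + int b - 1 = 1 - (int b - 1) * int k" by (simp add: algebra_simps)
  have "mu b 1 ?d = mu b 1 (1 - (int b - 1) * int k) / real b"
    using rel1[OF b, of ?d] d1 unfolding e by simp
  then have m: "mu b 1 ?d = ((real b - 1)/real b^(k+1)) / real b" using Suc.IH by simp
  have "((real b - 1)/real b^(k+1)) / real b = (real b - 1)/real b^(Suc k+1)" by simp
  then show ?case using m by simp
qed

lemma mu1_nn:
  assumes b: "b \<ge> 2" shows "mu b 1 d \<ge> 0"
proof (cases "\<exists>k::nat. d = 1 - (int b - 1) * int k")
  case True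
  then obtain k where "d = 1 - (int b - 1) * int k" by blast
  then show ?thesis using mu1_val[OF b, of k] b by simp
next
  case False then show ?thesis using mu1_zero[OF b] by auto
qed


lemma mu1_sq_summable:
  assumes b: "b \<ge> 2"
  shows "(\<lambda>d. (real_of_int d)^2 * mu b 1 d) summable_on UNIV"
proof -
  define h :: "nat \<Rightarrow> int" where "h k = 1 - (int b - 1) * int k" for k
  define g where "g d = (real_of_int d)^2 * mu b 1 d" for d
  have inj: "inj_on h UNIV"
  proof (rule inj_onI)
    fix x y assume "h x = h y"
    then have "(int b - 1) * int x = (int b - 1) * int y" unfolding h_def by simp
    then show "x = y" using b by simp
  qed
  have gh: "(g \<circ> h) k = (real_of_int (h k))^2 * ((real b - 1) / real b ^ (k+1))" for k
    unfolding g_def h_def o_def using mu1_val[OF b, of k] by simp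
  have bound: "norm ((g \<circ> h) k) \<le> (real b)^2 * ((real k + 1)^2 * (1/2)^k)" for k
  proof -
    have a1: "\<bar>real_of_int (h k)\<bar> \<le> real b * (real k + 1)"
    proof -
      have x0: "0 \<le> (real b - 1) * real k" using b by simp
      have "\<bar>real_of_int (h k)\<bar> = \<bar>1 - (real b - 1) * real k\<bar>" unfolding h_def using b by simp
      also have "\<dots> \<le> 1 + (real b - 1) * real k" using x0 by (simp add: abs_le_iff)
      finally have "\<bar>real_of_int (h k)\<bar> \<le> 1 + (real b - 1) * real k" .
      also have "\<dots> \<le> real b * (real k + 1)" using b by (simp add: algebra_simps)
      finally show ?thesis .
    qed
    have a2: "(real_of_int (h k))^2 \<le> (real b * (real k + 1))^2"
      using power_mono[OF a1, of 2] by simp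
    have a3: "(real b - 1) / real b ^ (k+1) \<le> (1/2)^k"
    proof -
      have "(real b - 1) / real b ^ (k+1) \<le> real b / real b ^ (k+1)"
        using b by (intro divide_right_mono) auto
      also have "\<dots> = 1 / real b ^ k" using b by simp
      also have "\<dots> \<le> 1 / 2 ^ k" using b by (intro divide_left_mono power_mono) auto
      also have "\<dots> = (1/2)^k" by (simp add: power_divide)
      finally show ?thesis .
    qed
    have nn: "0 \<le> (real b - 1) / real b ^ (k+1)" using b by simp
    have nn2: "0 \<le> (real_of_int (h k))^2 * ((real b - 1) / real b ^ (k+1))"
      by (rule mult_nonneg_nonneg[OF zero_le_power2 nn])
    have "norm ((g \<circ> h) k) = (real_of_int (h k))^2 * ((real b - 1) / real b ^ (k+1))"
      unfolding gh using nn2 by (simp only: real_norm_def abs_of_nonneg)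
    also have "\<dots> \<le> (real b * (real k + 1))^2 * (1/2)^k"
      by (rule mult_mono[OF a2 a3]) (use nn in auto)
    also have "\<dots> = (real b)^2 * ((real k + 1)^2 * (1/2)^k)" by (simp add: power_mult_distrib)
    finally show ?thesis .
  qed
  have "summable (\<lambda>k. (real b)^2 * ((real k + 1)^2 * (1/2)^k))"
    by (rule summable_mult[OF summable_sq_geom])
  then have "summable (g \<circ> h)" by (rule summable_comparison_test'[where N=0]) (rule bound)
  moreover have "(g \<circ> h) k \<ge> 0" for k unfolding gh using b by simp
  ultimately have "(g \<circ> h) summable_on UNIV" using summable_on_UNIV_nonneg_real_iff by blast
  then have "g summable_on (h ` UNIV)" using summable_on_reindex[OF inj] by blast
  moreover have "g summable_on UNIV \<longleftrightarrow> g summable_on (range h)"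
  proof (rule summable_on_cong_neutral)
    fix x assume "x \<in> UNIV - range h"
    then have "\<forall>k. x \<noteq> 1 - (int b - 1) * int k" unfolding h_def by auto
    then show "g x = 0" unfolding g_def using mu1_zero[OF b] by simp
  qed auto
  ultimately show ?thesis unfolding g_def by simp
qed

lemma base1:
  assumes b: "b \<ge> 2"
  shows "conv b 1 \<and> (\<exists>S. dmom (mu b 1) 1 0 S)"
proof -
  note sq = mu1_sq_summable[OF b]
  note mom = mom_from_sq[OF mu1_nn[OF b] sq]
  define T where "T = infsum (mu b 1) UNIV"
  define M where "M = infsum (\<lambda>d. real_of_int d * mu b 1 d) UNIV"
  define S where "S = infsum (\<lambda>d. (real_of_int d)^2 * mu b 1 d) UNIV"
  have D: "dmom (mu b 1) T M S" unfolding dmom_def T_def M_def S_def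
    using mom sq by (simp add: summable_iff_has_sum_infsum[symmetric])
  define q where "q j = mu b (rho1 b j)" for j
  define Tj where "Tj j = (if j + 1 < b then 1 else T)" for j
  define Mj where "Mj j = (if j + 1 < b then 0 else M)" for j
  define Sj where "Sj j = (if j + 1 < b then 0 else S)" for j
  have rel: "mu b 1 d = (\<Sum>j<b. q j (d - kap1 b j)) / real b" for d
  proof -
    have dec: "\<And>q j. j < b \<Longrightarrow> Delta b 1 (b*q+j) = Delta b (rho1 b j) q + kap1 b j"
      using dec1'[OF b] by simp
    have B: "b > 0" using b by simp
    have cs: "conv b (rho1 b j)" for j using base0 conv1[OF b] unfolding rho1_def by auto
    from mix_all[OF B dec cs] show ?thesis unfolding q_def by blast
  qed
  have qs: "dmom (q j) (Tj j) (Mj j) (Sj j)" if "j < b" for j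
    using base0 D unfolding q_def Tj_def Mj_def Sj_def rho1_def by auto
  note D2 = dmom_mix[OF rel qs]
  obtain c where c: "b = Suc c" using b by (cases b) auto
  have sT: "(\<Sum>j<b. Tj j) = real c + T"
  proof -
    have "(\<Sum>j<b. Tj j) = (\<Sum>j<c. Tj j) + T" by (simp add: Tj_def c)
    also have "(\<Sum>j<c. Tj j) = (\<Sum>j<c. 1)" by (rule sum.cong) (auto simp: Tj_def c)
    finally show ?thesis by simp
  qed
  have sM: "(\<Sum>j<b. Mj j + real_of_int (kap1 b j) * Tj j) = real c + M + (1 - real b) * T"
  proof -
    have "(\<Sum>j<b. Mj j + real_of_int (kap1 b j) * Tj j) = (\<Sum>j<c. Mj j + real_of_int (kap1 b j) * Tj j) + (M + (1 - real b) * T)"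
      by (simp add: Tj_def Mj_def kap1_def c)
    also have "(\<Sum>j<c. Mj j + real_of_int (kap1 b j) * Tj j) = (\<Sum>j<c. 1)"
      by (rule sum.cong) (auto simp: Tj_def Mj_def kap1_def c)
    finally show ?thesis by simp
  qed
  have T1: "T = (real c + T) / real b"
    using has_sum_unique D D2 sT unfolding dmom_def by metis
  then have T1': "T = 1" using c b by (simp add: field_simps)
  have "M = (real c + M + (1 - real b) * T) / real b"
    using has_sum_unique D D2 sM unfolding dmom_def by metis
  then have "M = 0" using c b T1' by (simp add: field_simps)
  then show ?thesis using D T1' conv1[OF b] by blast
qed


lemma all_r:
  assumes b: "b \<ge> 2"
  shows "conv b r \<and> (\<exists>S. dmom (mu b r) 1 0 S)"
proof (induction r rule: less_induct)
  case (less r)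
  consider "r = 0" | "r = 1" | "r \<ge> 2" by linarith
  then show ?case
  proof cases
    case 1 then show ?thesis using base0 by blast
  next
    case 2 then show ?thesis using base1[OF b] by simp
  next
    case 3
    define r0 where "r0 = r div b"
    define a where "a = r mod b"
    have B: "b > 0" using b by simp
    have ab: "a < b" unfolding a_def using B by simp
    have r: "r = b * r0 + a" unfolding r0_def a_def by simp
    define \<rho> where "\<rho> j = (if j + a < b then r0 else Suc r0)" for j
    have dec: "Delta b r (b*q+j) = Delta b (\<rho> j) q +
         (int (digsum b ((j + a) mod b)) - int (digsum b j))" if "j < b" for q j
      using Delta_dec[OF b, of a 1 j r0 q] ab that unfolding \<rho>_def r by simp
    have lt: "\<rho> j < r" if "j < b" for j
    proof (cases "j + a < b")
      case True
      have "r div b < r" using 3 b by simp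
      then show ?thesis using True unfolding \<rho>_def r0_def by simp
    next
      case False
      then have a1: "a \<ge> 1" using that by simp
      have h2: "b * r0 \<ge> 2 * r0" using b by simp
      have "Suc r0 < r" using h2 r a1 3 by (cases "r0 = 0") (simp, linarith)
      then show ?thesis using False unfolding \<rho>_def by simp
    qed
    have "\<forall>j\<in>{..<b}. \<exists>S. conv b (\<rho> j) \<and> dmom (mu b (\<rho> j)) 1 0 S"
      using less.IH lt by blast
    then obtain Sf where Sf: "\<forall>j\<in>{..<b}. conv b (\<rho> j) \<and> dmom (mu b (\<rho> j)) 1 0 (Sf j)"
      by (metis bchoice)
    from step[OF B dec, of Sf] Sf show ?thesis by blast
  qed
qed

theorem mainTheorem12:
  fixes b r m :: nat
  assumes "b \<ge> 2" and "m \<ge> 1"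
  shows "Var_mu b (b^m * r + b^m - 1)
         = 1 / real b ^ m * Var_mu b r + (1 - 1 / real b ^ m) * Var_mu b (r + 1)
           + real b - 1 / real b ^ (m - 1)"
proof -
  note b = assms(1)
  define B where "B = b^m"
  have B0: "B > 0" unfolding B_def using b by simp
  have r': "b^m * r + b^m - 1 = B * r + (B - 1)"
  proof -
    have "b^m \<ge> 1" using b by simp
    then show ?thesis unfolding B_def by linarith
  qed
  obtain S0 where S0: "dmom (mu b r) 1 0 S0" using all_r[OF b] by blast
  obtain S1 where S1: "dmom (mu b (Suc r)) 1 0 S1" using all_r[OF b] by blast
  define \<rho> :: "nat \<Rightarrow> nat" where "\<rho> j = (if j = 0 then r else Suc r)" for j
  define Sf :: "nat \<Rightarrow> real" where "Sf j = (if j = 0 then S0 else S1)" for j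
  have dec: "Delta b (B * r + (B - 1)) (B*q+j) = Delta b (\<rho> j) q +
         (int (digsum b ((j + (B - 1)) mod B)) - int (digsum b j))" if "j < B" for q j
  proof -
    have iff: "(j + (b^m - 1) < b^m) = (j = 0)" using B0 unfolding B_def by arith
    have "Delta b (b^m * r + (b^m - 1)) (b^m*q+j) = Delta b (if j + (b^m - 1) < b^m then r else Suc r) q +
         (int (digsum b ((j + (b^m - 1)) mod b^m)) - int (digsum b j))"
      by (rule Delta_dec[OF b]) (use B0 that in \<open>simp_all add: B_def\<close>)
    then show ?thesis unfolding iff \<rho>_def B_def .
  qed
  have cs: "conv b (\<rho> j)" for j using all_r[OF b] by blast
  have ds: "dmom (mu b (\<rho> j)) 1 0 (Sf j)" for j using S0 S1 unfolding \<rho>_def Sf_def by simp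
  have D: "dmom (mu b (B * r + (B - 1))) 1 0
     ((\<Sum>j<B. Sf j + (real_of_int (int (digsum b ((j + (B - 1)) mod B)) - int (digsum b j)))^2) / real B)"
    using step[OF B0 dec cs ds] by blast
  have kD: "int (digsum b ((j + (B - 1)) mod B)) - int (digsum b j) = Dk b m j" for j
    unfolding Dk_def B_def by simp
  obtain c where c: "B = Suc c" using B0 by (cases B) auto
  have sS: "(\<Sum>j<B. Sf j) = S0 + real c * S1"
  proof -
    have "(\<Sum>j<B. Sf j) = Sf 0 + (\<Sum>i<c. Sf (Suc i))" unfolding c by (rule sum.lessThan_Suc_shift)
    also have "(\<Sum>i<c. Sf (Suc i)) = (\<Sum>i<c. S1)" by (rule sum.cong) (auto simp: Sf_def c)
    finally show ?thesis by (simp add: Sf_def c)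
  qed
  have sD: "(\<Sum>j<B. (real_of_int (Dk b m j))^2) = real b ^ (m+1) - real b"
  proof -
    have "(\<Sum>j<B. (Dk b m j)^2) = int b ^ (m+1) - int b" using Dk_sums[OF b] unfolding B_def by blast
    then have "real_of_int (\<Sum>j<B. (Dk b m j)^2) = real_of_int (int b ^ (m+1) - int b)" by simp
    then show ?thesis by simp
  qed
  have V: "Var_mu b (B * r + (B - 1)) = (S0 + real c * S1 + (real b ^ (m+1) - real b)) / real B"
    using dmom_infsum[OF D] unfolding kD by (simp add: sum.distrib sS sD)
  have V0: "Var_mu b r = S0" using dmom_infsum[OF S0] by simp
  have V1: "Var_mu b (r+1) = S1" using dmom_infsum[OF S1] by simp
  obtain m' where m': "m = Suc m'" using assms(2) by (cases m) auto
  have Bb: "real B = real b * real b ^ m'" unfolding B_def m' by simp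
  have cB: "real c = real B - 1" using c by simp
  have bpos: "real b > 0" using b by simp
  have "(S0 + real c * S1 + (real b ^ (m+1) - real b)) / real B
      = 1 / real B * S0 + (1 - 1 / real B) * S1 + real b - 1 / real b ^ m'"
    unfolding cB m' using bpos Bb by (simp add: field_simps)
  then show ?thesis unfolding r' V V0 V1 using m' B_def by simp
qed


end
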